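(* Let $n\ge1$. There is a $\Pi^0_n$ equivalence relation on $\mathbb{N}^\mathbb{N}$, all of whose classes are countably infinite, which is not $\Sigma^0_n$-graphable.
   Context: $E$ is $\Gamma$-graphable if there is a simple undirected graph $G$ in $\Gamma$ whose connectedness relation (connected by a finite path) equals $E$. Pointclasses are lightface. *)

theory Defs
  imports Main "HOL-Library.Countable_Set" "HOL-Library.Nat_Bijection"
begin

type_synonym baire = "nat \<Rightarrow> nat"

definition nth0 :: "nat list \<Rightarrow> nat \<Rightarrow> nat" where
  "nth0 xs i = (if i < length xs then xs ! i else 0)"

(* primitive recursive functions (arguments given as a list; missing arguments read as 0) *)
inductive primrec_fn :: "(nat list \<Rightarrow> nat) \<Rightarrow> bool" where
  zero: "primrec_fn (\<lambda>_. 0)"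
| succ: "primrec_fn (\<lambda>xs. Suc (nth0 xs 0))"
| proj: "primrec_fn (\<lambda>xs. nth0 xs i)"
| comp: "primrec_fn f \<Longrightarrow> (\<And>g. g \<in> set gs \<Longrightarrow> primrec_fn g)
         \<Longrightarrow> primrec_fn (\<lambda>xs. f (map (\<lambda>g. g xs) gs))"
| prec: "primrec_fn f \<Longrightarrow> primrec_fn g
         \<Longrightarrow> primrec_fn (\<lambda>xs. rec_nat (f (tl xs)) (\<lambda>n r. g (n # r # tl xs)) (nth0 xs 0))"

definition Sigma01 :: "baire set \<Rightarrow> bool" where
  "Sigma01 A \<longleftrightarrow> (\<exists>f. primrec_fn f \<and>
      A = {x. \<exists>k. f [list_encode (map x [0..<k])] \<noteq> 0})"

(* m prepended to x: codes the pair (m, x) in N x N^N *)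
definition ncons :: "nat \<Rightarrow> baire \<Rightarrow> baire" where
  "ncons m x = (\<lambda>i. case i of 0 \<Rightarrow> m | Suc j \<Rightarrow> x j)"

(* lightface Sigma^0_n / Pi^0_n for n \<ge> 1 (index 0 is a dummy equal to level 1) *)
fun Sigma0 :: "nat \<Rightarrow> baire set \<Rightarrow> bool"
and Pi0 :: "nat \<Rightarrow> baire set \<Rightarrow> bool" where
  "Sigma0 0 A = Sigma01 A"
| "Sigma0 (Suc 0) A = Sigma01 A"
| "Sigma0 (Suc (Suc n)) A = (\<exists>B. Pi0 (Suc n) B \<and> A = {x. \<exists>m. ncons m x \<in> B})"
| "Pi0 n A = Sigma0 n (- A)"

definition bfst :: "baire \<Rightarrow> baire" where "bfst z = (\<lambda>i. z (2 * i))"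
definition bsnd :: "baire \<Rightarrow> baire" where "bsnd z = (\<lambda>i. z (2 * i + 1))"

definition rel_code :: "(baire \<times> baire) set \<Rightarrow> baire set" where
  "rel_code R = {z. (bfst z, bsnd z) \<in> R}"

definition Sigma0_rel :: "nat \<Rightarrow> (baire \<times> baire) set \<Rightarrow> bool" where
  "Sigma0_rel n R = Sigma0 n (rel_code R)"

definition Pi0_rel :: "nat \<Rightarrow> (baire \<times> baire) set \<Rightarrow> bool" where
  "Pi0_rel n R = Pi0 n (rel_code R)"

(* E is Sigma^0_n-graphable: some simple undirected graph G in Sigma^0_n has
   connectedness relation (finite paths, i.e. reflexive-transitive closure) equal to E *)
definition Sigma0_graphable :: "nat \<Rightarrow> (baire \<times> baire) set \<Rightarrow> bool" where
  "Sigma0_graphable n E \<longleftrightarrow> (\<exists>G. sym G \<and> irrefl G \<and> Sigma0_rel n G \<and> G\<^sup>* = E)"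

end

theory Submission
  imports Defs
begin




lemma nth0_Nil[simp]: "nth0 [] i = 0" by (simp add: nth0_def)
lemma nth0_Cons0[simp]: "nth0 (x#xs) 0 = x" by (simp add: nth0_def)
lemma nth0_ConsS[simp]: "nth0 (x#xs) (Suc i) = nth0 xs i" by (simp add: nth0_def)
lemma nth0_tl[simp]: "nth0 (tl xs) i = nth0 xs (Suc i)"
  by (cases xs) (auto simp: nth0_def)

lemma nth0_map_upt[simp]: "i < N \<Longrightarrow> nth0 (map f [0..<N]) i = f i"
  by (simp add: nth0_def)

definition supp_ok :: "(nat list \<Rightarrow> nat) \<Rightarrow> nat \<Rightarrow> bool" where
  "supp_ok g N \<longleftrightarrow> (\<forall>xs ys. (\<forall>i<N. nth0 xs i = nth0 ys i) \<longrightarrow> g xs = g ys)"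

lemma supp_ok_mono: "supp_ok g N \<Longrightarrow> N \<le> M \<Longrightarrow> supp_ok g M"
  unfolding supp_ok_def by (meson less_le_trans)

lemma supp_list: "(\<And>g. g \<in> set gs \<Longrightarrow> \<exists>N. supp_ok g N) \<Longrightarrow> \<exists>N. \<forall>g\<in>set gs. supp_ok g N"
proof (induction gs)
  case Nil then show ?case by auto
next
  case (Cons a gs)
  then obtain N1 where "\<forall>g\<in>set gs. supp_ok g N1" by auto
  moreover obtain N2 where "supp_ok a N2" using Cons by auto
  ultimately show ?case
    by (metis max.cobounded1 max.cobounded2 set_ConsD supp_ok_mono)
qed

lemma primrec_supp: "primrec_fn g \<Longrightarrow> \<exists>N. supp_ok g N"
proof (induction rule: primrec_fn.induct)
  case zero then show ?case by (auto simp: supp_ok_def)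
next
  case succ then show ?case by (rule exI[of _ 1]) (auto simp: supp_ok_def)
next
  case (proj i) then show ?case by (rule exI[of _ "Suc i"]) (auto simp: supp_ok_def)
next
  case (comp f gs)
  then obtain N where N: "\<forall>g\<in>set gs. supp_ok g N" using supp_list[of gs] by blast
  show ?case
  proof (rule exI[of _ N], unfold supp_ok_def, intro allI impI)
    fix xs ys assume "\<forall>i<N. nth0 xs i = nth0 ys i"
    then have "map (\<lambda>g. g xs) gs = map (\<lambda>g. g ys) gs"
      using N unfolding supp_ok_def by auto
    then show "f (map (\<lambda>g. g xs) gs) = f (map (\<lambda>g. g ys) gs)" by (simp only:)
  qed
next
  case (prec f g)
  then obtain N1 N2 where N1: "supp_ok f N1" and N2: "supp_ok g N2" by blast
  show ?case
  proof (rule exI[of _ "Suc (N1 + N2)"], unfold supp_ok_def, intro allI impI)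
    fix xs ys assume A: "\<forall>i<Suc (N1 + N2). nth0 xs i = nth0 ys i"
    have 0: "nth0 xs 0 = nth0 ys 0" using A by auto
    have 1: "f (tl xs) = f (tl ys)" using N1 A unfolding supp_ok_def by auto
    have 2: "g (n # r # tl xs) = g (n # r # tl ys)" for n r
    proof -
      have "\<forall>i<N2. nth0 (n # r # tl xs) i = nth0 (n # r # tl ys) i"
      proof (intro allI impI)
        fix i assume "i < N2"
        then show "nth0 (n # r # tl xs) i = nth0 (n # r # tl ys) i"
          using A by (cases i; cases "i - 1"; auto)
      qed
      then show ?thesis using N2 unfolding supp_ok_def by blast
    qed
    show "rec_nat (f (tl xs)) (\<lambda>n r. g (n # r # tl xs)) (nth0 xs 0) =
          rec_nat (f (tl ys)) (\<lambda>n r. g (n # r # tl ys)) (nth0 ys 0)"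
      unfolding 0 1 2 ..
  qed
qed

lemma pr_reindex:
  assumes "primrec_fn g" "\<And>ys i. nth0 (R ys) i = nth0 ys (\<sigma> i)"
  shows "primrec_fn (\<lambda>ys. g (R ys))"
proof -
  obtain N where N: "supp_ok g N" using primrec_supp assms(1) by blast
  have eq: "g (R ys) = g (map (\<lambda>i. nth0 ys (\<sigma> i)) [0..<N])" for ys
    using N assms(2) unfolding supp_ok_def by (auto simp: nth0_def)
  have "primrec_fn (\<lambda>ys. g (map (\<lambda>h. h ys) (map (\<lambda>i ys. nth0 ys (\<sigma> i)) [0..<N])))"
    by (rule primrec_fn.comp[OF assms(1)]) (auto intro: primrec_fn.proj)
  then show ?thesis by (simp add: eq o_def)
qed

lemma pr_subst:
  assumes "primrec_fn g" "primrec_fn e" "\<And>ys i. nth0 (R ys) i = nth0 ys (\<sigma> i)"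
  shows "primrec_fn (\<lambda>ys. g (e ys # R ys))"
proof -
  obtain N where N: "supp_ok g N" using primrec_supp assms(1) by blast
  have eq: "g (e ys # R ys) = g (e ys # map (\<lambda>i. nth0 ys (\<sigma> i)) [0..<N])" for ys
  proof -
    have "\<forall>i<N. nth0 (e ys # R ys) i = nth0 (e ys # map (\<lambda>i. nth0 ys (\<sigma> i)) [0..<N]) i"
    proof (intro allI impI)
      fix i assume "i < N" then show "nth0 (e ys # R ys) i = nth0 (e ys # map (\<lambda>i. nth0 ys (\<sigma> i)) [0..<N]) i"
        using assms(3) by (cases i) auto
    qed
    then show ?thesis using N unfolding supp_ok_def by blast
  qed
  have "primrec_fn (\<lambda>ys. g (map (\<lambda>h. h ys) (e # map (\<lambda>i ys. nth0 ys (\<sigma> i)) [0..<N])))"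
    by (rule primrec_fn.comp[OF assms(1)]) (auto intro: primrec_fn.proj assms(2))
  then show ?thesis by (simp add: eq o_def)
qed

lemma nth0_drop[simp]: "nth0 (drop k xs) i = nth0 xs (i + k)"
  unfolding nth0_def by (cases "i + k < length xs") (auto simp: add.commute)

lemma pr_const: "primrec_fn (\<lambda>xs. c)"
proof (induction c)
  case 0 then show ?case by (rule primrec_fn.zero)
next
  case (Suc c)
  have "primrec_fn (\<lambda>xs. Suc (nth0 (map (\<lambda>g. g xs) [\<lambda>xs. c]) 0))"
    by (rule primrec_fn.comp[OF primrec_fn.succ]) (use Suc in auto)
  then show ?case by simp
qed

lemma pr_nth: "primrec_fn (\<lambda>xs. nth0 xs i)" by (rule primrec_fn.proj)

lemma pr_comp1:
  assumes "primrec_fn (\<lambda>ys. F (nth0 ys 0))" "primrec_fn e"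
  shows "primrec_fn (\<lambda>xs. F (e xs))"
proof -
  have "primrec_fn (\<lambda>xs. (\<lambda>ys. F (nth0 ys 0)) (map (\<lambda>g. g xs) [e]))"
    by (rule primrec_fn.comp[OF assms(1)]) (use assms in auto)
  then show ?thesis by simp
qed

lemma pr_comp2:
  assumes "primrec_fn (\<lambda>ys. F (nth0 ys 0) (nth0 ys 1))" "primrec_fn e1" "primrec_fn e2"
  shows "primrec_fn (\<lambda>xs. F (e1 xs) (e2 xs))"
proof -
  have "primrec_fn (\<lambda>xs. (\<lambda>ys. F (nth0 ys 0) (nth0 ys 1)) (map (\<lambda>g. g xs) [e1, e2]))"
    by (rule primrec_fn.comp[OF assms(1)]) (use assms in auto)
  then show ?thesis by (simp add: numeral_eq_Suc)
qed

lemma pr_comp3: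
  assumes "primrec_fn (\<lambda>ys. F (nth0 ys 0) (nth0 ys 1) (nth0 ys 2))" "primrec_fn e1" "primrec_fn e2" "primrec_fn e3"
  shows "primrec_fn (\<lambda>xs. F (e1 xs) (e2 xs) (e3 xs))"
proof -
  have "primrec_fn (\<lambda>xs. (\<lambda>ys. F (nth0 ys 0) (nth0 ys 1) (nth0 ys 2)) (map (\<lambda>g. g xs) [e1, e2, e3]))"
    by (rule primrec_fn.comp[OF assms(1)]) (use assms in auto)
  then show ?thesis by (simp add: numeral_eq_Suc)
qed

lemma pr_app1: "primrec_fn f \<Longrightarrow> primrec_fn e \<Longrightarrow> primrec_fn (\<lambda>xs. f [e xs])"
  using primrec_fn.comp[of f "[e]"] by auto

lemma pr_rec:
  assumes k: "primrec_fn k" and A: "primrec_fn A"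
    and B: "primrec_fn (\<lambda>ys. B (nth0 ys 0) (nth0 ys 1) (drop 2 ys))"
  shows "primrec_fn (\<lambda>xs. rec_nat (A xs) (\<lambda>n r. B n r xs) (k xs))"
proof -
  have "primrec_fn (\<lambda>zs. rec_nat (A (tl zs)) (\<lambda>n r. (\<lambda>ys. B (nth0 ys 0) (nth0 ys 1) (drop 2 ys)) (n # r # tl zs)) (nth0 zs 0))"
    by (rule primrec_fn.prec[OF A B])
  then have "primrec_fn (\<lambda>zs. rec_nat (A (tl zs)) (\<lambda>n r. B n r (tl zs)) (nth0 zs 0))" by simp
  from pr_subst[OF this k, of "\<lambda>ys. ys" "\<lambda>i. i"] show ?thesis by simp
qed

lemma pr_Suc: "primrec_fn e \<Longrightarrow> primrec_fn (\<lambda>xs. Suc (e xs))"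
  using pr_comp1[OF primrec_fn.succ] .

lemma pr_nth1S: "primrec_fn (\<lambda>ys. Suc (nth0 ys 1))" by (intro pr_Suc pr_nth)

lemma rec_add: "rec_nat a (\<lambda>n r. Suc r) m = a + m" by (induct m) auto

lemma pr_add: assumes "primrec_fn a" "primrec_fn b" shows "primrec_fn (\<lambda>xs. a xs + b xs)"
proof -
  have "primrec_fn (\<lambda>xs. rec_nat (a xs) (\<lambda>n r. Suc r) (b xs))"
    by (rule pr_rec[OF assms(2,1)]) (rule pr_nth1S)
  then show ?thesis by (simp add: rec_add)
qed

lemma rec_pred: "rec_nat 0 (\<lambda>n r. n) m = m - 1" by (induct m) auto

lemma pr_pred: assumes "primrec_fn a" shows "primrec_fn (\<lambda>xs. a xs - 1)"
proof -
  have "primrec_fn (\<lambda>xs. rec_nat 0 (\<lambda>n r. n) (a xs))"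
    by (rule pr_rec[OF assms pr_const]) (rule pr_nth)
  then show ?thesis by (simp add: rec_pred)
qed

lemma rec_sub: "rec_nat a (\<lambda>n r. r - Suc 0) m = a - m" by (induct m) auto

lemma pr_sub: assumes "primrec_fn a" "primrec_fn b" shows "primrec_fn (\<lambda>xs. a xs - b xs)"
proof -
  have "primrec_fn (\<lambda>xs. rec_nat (a xs) (\<lambda>n r. r - 1) (b xs))"
    by (rule pr_rec[OF assms(2,1)]) (rule pr_pred[OF pr_nth])
  then show ?thesis by (simp add: rec_sub)
qed

lemma rec_mult: "rec_nat 0 (\<lambda>n r. r + a) m = m * a" by (induct m) auto

lemma pr_drop2: "primrec_fn a \<Longrightarrow> primrec_fn (\<lambda>ys. a (drop 2 ys))"
  by (rule pr_reindex[of a _ "\<lambda>i. i + 2"]) simp_all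

lemma pr_mult: assumes "primrec_fn a" "primrec_fn b" shows "primrec_fn (\<lambda>xs. a xs * b xs)"
proof -
  have "primrec_fn (\<lambda>xs. rec_nat 0 (\<lambda>n r. r + a xs) (b xs))"
    by (rule pr_rec[OF assms(2) pr_const]) (rule pr_add[OF pr_nth pr_drop2[OF assms(1)]])
  then show ?thesis by (simp add: rec_mult mult.commute)
qed

lemma rec_if: "rec_nat a (\<lambda>n r. b) m = (if m = 0 then a else b)" by (cases m) auto

lemma pr_ifz: assumes "primrec_fn c" "primrec_fn a" "primrec_fn b"
  shows "primrec_fn (\<lambda>xs. if c xs = 0 then a xs else b xs)"
proof -
  have "primrec_fn (\<lambda>xs. rec_nat (a xs) (\<lambda>n r. b xs) (c xs))"
    by (rule pr_rec[OF assms(1,2)]) (rule pr_drop2[OF assms(3)])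
  then show ?thesis by (simp add: rec_if)
qed

definition prpred :: "(nat list \<Rightarrow> bool) \<Rightarrow> bool" where
  "prpred P \<longleftrightarrow> primrec_fn (\<lambda>xs. if P xs then 1 else 0)"

lemma pr_if: assumes "prpred P" "primrec_fn a" "primrec_fn b"
  shows "primrec_fn (\<lambda>xs. if P xs then a xs else b xs)"
proof -
  have "primrec_fn (\<lambda>xs. if (if P xs then 1 else 0) = (0::nat) then b xs else a xs)"
    using assms unfolding prpred_def by (intro pr_ifz) auto
  moreover have "(\<lambda>xs. if (if P xs then 1 else 0) = (0::nat) then b xs else a xs) = (\<lambda>xs. if P xs then a xs else b xs)"
    by auto
  ultimately show ?thesis by simp
qed

lemma pp_eq: assumes "primrec_fn a" "primrec_fn b" shows "prpred (\<lambda>xs. a xs = b xs)"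
proof -
  have "primrec_fn (\<lambda>xs. if (a xs - b xs) + (b xs - a xs) = 0 then 1 else 0)"
    by (intro pr_ifz pr_add pr_sub assms pr_const)
  moreover have "(\<lambda>xs. if (a xs - b xs) + (b xs - a xs) = 0 then (1::nat) else 0) = (\<lambda>xs. if a xs = b xs then 1 else 0)"
    by (rule ext) auto
  ultimately show ?thesis unfolding prpred_def by simp
qed

lemma pp_less: assumes "primrec_fn a" "primrec_fn b" shows "prpred (\<lambda>xs. a xs < b xs)"
proof -
  have "primrec_fn (\<lambda>xs. if b xs - a xs = 0 then 0 else 1)"
    by (intro pr_ifz pr_add pr_sub assms pr_const)
  moreover have "(\<lambda>xs. if b xs - a xs = 0 then 0 else (1::nat)) = (\<lambda>xs. if a xs < b xs then 1 else 0)"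
    by (rule ext) auto
  ultimately show ?thesis unfolding prpred_def by simp
qed

lemma pp_le: assumes "primrec_fn a" "primrec_fn b" shows "prpred (\<lambda>xs. a xs \<le> b xs)"
proof -
  have "primrec_fn (\<lambda>xs. if a xs - b xs = 0 then 1 else 0)"
    by (intro pr_ifz pr_add pr_sub assms pr_const)
  moreover have "(\<lambda>xs. if a xs - b xs = 0 then (1::nat) else 0) = (\<lambda>xs. if a xs \<le> b xs then 1 else 0)"
    by (rule ext) auto
  ultimately show ?thesis unfolding prpred_def by simp
qed

lemma pp_not: assumes "prpred P" shows "prpred (\<lambda>xs. \<not> P xs)"
proof -
  have "primrec_fn (\<lambda>xs. if P xs then 0 else 1)" by (intro pr_if assms pr_const)
  moreover have "(\<lambda>xs. if P xs then 0 else (1::nat)) = (\<lambda>xs. if \<not> P xs then 1 else 0)" by auto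
  ultimately show ?thesis unfolding prpred_def by simp
qed

lemma pp_and: assumes "prpred P" "prpred Q" shows "prpred (\<lambda>xs. P xs \<and> Q xs)"
proof -
  have "primrec_fn (\<lambda>xs. if P xs then (if Q xs then 1 else 0) else 0)"
    using assms by (intro pr_if pr_const) (auto simp: prpred_def)
  moreover have "(\<lambda>xs. if P xs then (if Q xs then 1 else 0) else (0::nat)) = (\<lambda>xs. if P xs \<and> Q xs then 1 else 0)" by auto
  ultimately show ?thesis unfolding prpred_def by simp
qed

lemma pp_or: assumes "prpred P" "prpred Q" shows "prpred (\<lambda>xs. P xs \<or> Q xs)"
proof -
  have "primrec_fn (\<lambda>xs. if P xs then 1 else (if Q xs then 1 else 0))"
    using assms by (intro pr_if pr_const) (auto simp: prpred_def)
  moreover have "(\<lambda>xs. if P xs then 1 else (if Q xs then 1 else (0::nat))) = (\<lambda>xs. if P xs \<or> Q xs then 1 else 0)" by auto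
  ultimately show ?thesis unfolding prpred_def by simp
qed

lemma rec_ex: "rec_nat 0 (\<lambda>n r. if P n then 1 else r) m = (if \<exists>i<m. P i then 1 else 0)"
  by (induct m) (auto simp: less_Suc_eq)

lemma pp_ex:
  assumes "primrec_fn k" "prpred (\<lambda>ys. P (nth0 ys 0) (tl ys))"
  shows "prpred (\<lambda>xs. \<exists>i<k xs. P i xs)"
proof -
  have "primrec_fn (\<lambda>ys. (\<lambda>ys. if P (nth0 ys 0) (tl ys) then 1 else 0) (nth0 ys 0 # drop 2 ys))"
    by (rule pr_subst[OF assms(2)[unfolded prpred_def], of _ _ "\<lambda>i. i + 2"]) (auto intro: pr_nth)
  then have that: "primrec_fn (\<lambda>ys. if P (nth0 ys 0) (drop 2 ys) then 1 else 0)" by simp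
  have "primrec_fn (\<lambda>ys. if P (nth0 ys 0) (drop 2 ys) then 1 else nth0 ys 1)"
    by (rule pr_if) (use that in \<open>simp_all add: prpred_def pr_nth pr_const\<close>)
  from pr_rec[OF assms(1) pr_const[of 0] this] show ?thesis
    unfolding prpred_def by (simp add: rec_ex)
qed

lemma rec_find: "(\<And>j. P j \<longleftrightarrow> j = i) \<Longrightarrow> rec_nat 0 (\<lambda>n r. if P n then n else r) m = (if i < m then i else 0)"
  by (induct m) auto

lemma pr_find:
  assumes "primrec_fn k" "prpred (\<lambda>ys. P (nth0 ys 0) (tl ys))"
  shows "primrec_fn (\<lambda>xs. rec_nat 0 (\<lambda>n r. if P n xs then n else r) (k xs))"
proof -
  have "primrec_fn (\<lambda>ys. (\<lambda>ys. if P (nth0 ys 0) (tl ys) then 1 else 0) (nth0 ys 0 # drop 2 ys))"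
    by (rule pr_subst[OF assms(2)[unfolded prpred_def], of _ _ "\<lambda>i. i + 2"]) (auto intro: pr_nth)
  then have that: "primrec_fn (\<lambda>ys. if P (nth0 ys 0) (drop 2 ys) then 1 else 0)" by simp
  have "primrec_fn (\<lambda>ys. if P (nth0 ys 0) (drop 2 ys) then nth0 ys 0 else nth0 ys 1)"
    by (rule pr_if) (use that in \<open>simp_all add: prpred_def pr_nth pr_const\<close>)
  from pr_rec[OF assms(1) pr_const[of 0] this] show ?thesis by simp
qed




lemma pr_nth_tl: "primrec_fn (\<lambda>ys. nth0 (tl ys) i)"
  by (simp only: nth0_tl) (rule pr_nth)

lemmas prI = pr_const pr_nth pr_nth_tl pr_Suc pr_add pr_sub pr_mult pr_if pp_eq pp_less pp_le
  pp_not pp_and pp_or pp_ex pr_app1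

lemma rec_tri: "rec_nat 0 (\<lambda>n r. r + Suc n) m = triangle m" by (induct m) auto

lemma pr_tri: assumes "primrec_fn e" shows "primrec_fn (\<lambda>xs. triangle (e xs))"
proof -
  have "primrec_fn (\<lambda>xs. rec_nat 0 (\<lambda>n r. r + Suc n) (e xs))"
    by (rule pr_rec[OF assms pr_const]) (intro prI)
  then show ?thesis by (simp only: rec_tri)
qed

lemma pr_penc: assumes "primrec_fn a" "primrec_fn b" shows "primrec_fn (\<lambda>xs. prod_encode (a xs, b xs))"
  unfolding prod_encode_def by (simp, intro pr_add pr_tri assms)

lemma pfst_unique: "(\<exists>n<Suc c. prod_encode (m, n) = c) \<longleftrightarrow> m = fst (prod_decode c)"
proof
  assume "\<exists>n<Suc c. prod_encode (m, n) = c"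
  then obtain n where "prod_encode (m, n) = c" by blast
  then have "prod_decode c = (m, n)" by (metis prod_encode_inverse)
  then show "m = fst (prod_decode c)" by simp
next
  assume m: "m = fst (prod_decode c)"
  have "prod_encode (m, snd (prod_decode c)) = c" using m by simp
  moreover have "snd (prod_decode c) < Suc c"
    by (metis le_imp_less_Suc le_prod_encode_2 prod.collapse prod_decode_inverse)
  ultimately show "\<exists>n<Suc c. prod_encode (m, n) = c" by blast
qed

lemma psnd_unique: "(\<exists>m<Suc c. prod_encode (m, n) = c) \<longleftrightarrow> n = snd (prod_decode c)"
proof
  assume "\<exists>m<Suc c. prod_encode (m, n) = c"
  then obtain m where "prod_encode (m, n) = c" by blast
  then have "prod_decode c = (m, n)" by (metis prod_encode_inverse)
  then show "n = snd (prod_decode c)" by simp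
next
  assume n: "n = snd (prod_decode c)"
  have "prod_encode (fst (prod_decode c), n) = c" using n by simp
  moreover have "fst (prod_decode c) < Suc c"
    by (metis le_imp_less_Suc le_prod_encode_1 prod.collapse prod_decode_inverse)
  ultimately show "\<exists>m<Suc c. prod_encode (m, n) = c" by blast
qed

lemma pfst_lt: "fst (prod_decode c) < Suc c"
  by (metis le_imp_less_Suc le_prod_encode_1 prod.collapse prod_decode_inverse)
lemma psnd_lt: "snd (prod_decode c) < Suc c"
  by (metis le_imp_less_Suc le_prod_encode_2 prod.collapse prod_decode_inverse)

lemma pr_pfst: assumes "primrec_fn e" shows "primrec_fn (\<lambda>xs. fst (prod_decode (e xs)))"
proof -
  have "primrec_fn (\<lambda>ys. rec_nat 0 (\<lambda>m r. if (\<exists>n<Suc (nth0 ys 0). prod_encode (m, n) = nth0 ys 0) then m else r) (Suc (nth0 ys 0)))"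
    by (rule pr_find) (intro prI pr_penc | simp only: nth0_tl)+
  then have "primrec_fn (\<lambda>ys. fst (prod_decode (nth0 ys 0)))"
    by (simp only: rec_find[OF pfst_unique] pfst_lt if_True)
  from pr_comp1[OF this assms] show ?thesis .
qed

lemma pr_psnd: assumes "primrec_fn e" shows "primrec_fn (\<lambda>xs. snd (prod_decode (e xs)))"
proof -
  have "primrec_fn (\<lambda>ys. rec_nat 0 (\<lambda>n r. if (\<exists>m<Suc (nth0 ys 0). prod_encode (m, n) = nth0 ys 0) then n else r) (Suc (nth0 ys 0)))"
    by (rule pr_find) (intro prI pr_penc | simp only: nth0_tl)+
  then have "primrec_fn (\<lambda>ys. snd (prod_decode (nth0 ys 0)))"
    by (simp only: rec_find[OF psnd_unique] psnd_lt if_True)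
  from pr_comp1[OF this assms] show ?thesis .
qed

lemma prod_decode_0: "prod_decode 0 = (0, 0)"
proof -
  have "prod_encode (0, 0) = 0" by (simp add: prod_encode_def)
  then show ?thesis by (metis prod_encode_inverse)
qed

definition hdc :: "nat \<Rightarrow> nat" where "hdc c = fst (prod_decode (c - 1))"
definition tlc :: "nat \<Rightarrow> nat" where "tlc c = snd (prod_decode (c - 1))"

lemma pr_hdc: "primrec_fn e \<Longrightarrow> primrec_fn (\<lambda>xs. hdc (e xs))"
  unfolding hdc_def by (intro pr_pfst pr_sub pr_const)
lemma pr_tlc: "primrec_fn e \<Longrightarrow> primrec_fn (\<lambda>xs. tlc (e xs))"
  unfolding tlc_def by (intro pr_psnd pr_sub pr_const)

lemma list_decode_hdtl: "list_decode c = (if c = 0 then [] else hdc c # list_decode (tlc c))"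
  by (cases c) (auto simp: hdc_def tlc_def split: prod.splits)

lemma tlc_decode: "list_decode (tlc c) = tl (list_decode c)"
proof (cases c)
  case 0
  have "prod_decode 0 = (0, 0)" by (rule prod_decode_0)
  then have "tlc 0 = 0" by (simp add: tlc_def)
  then show ?thesis using 0 by simp
next
  case (Suc n) then show ?thesis by (subst (2) list_decode_hdtl) simp
qed

lemma hdc_decode: "hdc c = nth0 (list_decode c) 0"
proof (cases c)
  case 0
  have "prod_decode 0 = (0, 0)" by (rule prod_decode_0)
  then have "hdc 0 = 0" by (simp add: hdc_def)
  then show ?thesis using 0 by simp
next
  case (Suc n) then show ?thesis by (subst list_decode_hdtl) simp
qed

lemma rec_funpow: "rec_nat c (\<lambda>n r. f r) m = (f ^^ m) c" by (induct m) auto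

lemma pr_tlcpow: assumes "primrec_fn a" "primrec_fn b" shows "primrec_fn (\<lambda>xs. (tlc ^^ (a xs)) (b xs))"
proof -
  have "primrec_fn (\<lambda>xs. rec_nat (b xs) (\<lambda>n r. tlc r) (a xs))"
    by (rule pr_rec[OF assms(1,2)]) (intro pr_tlc pr_nth)
  then show ?thesis by (simp only: rec_funpow)
qed

lemma tlcpow_decode: "list_decode ((tlc ^^ i) c) = drop i (list_decode c)"
  by (induct i) (auto simp: tlc_decode drop_Suc tl_drop)

definition nthc :: "nat \<Rightarrow> nat \<Rightarrow> nat" where "nthc i c = hdc ((tlc ^^ i) c)"

lemma nthc_decode: "nthc i c = nth0 (list_decode c) i"
  by (simp add: nthc_def hdc_decode tlcpow_decode nth0_def)

lemma pr_nthc: "primrec_fn a \<Longrightarrow> primrec_fn b \<Longrightarrow> primrec_fn (\<lambda>xs. nthc (a xs) (b xs))"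
  unfolding nthc_def by (intro pr_hdc pr_tlcpow)

lemma length_le_encode: "length xs \<le> list_encode xs"
proof (induction xs)
  case (Cons a xs) then show ?case using le_prod_encode_2[of "list_encode xs" a] by simp
qed simp

definition lenc :: "nat \<Rightarrow> nat" where "lenc c = length (list_decode c)"

lemma tlcpow_zero: "(tlc ^^ i) c = 0 \<longleftrightarrow> lenc c \<le> i"
proof -
  have "(tlc ^^ i) c = 0 \<longleftrightarrow> list_decode ((tlc ^^ i) c) = []"
    by (metis list_decode.simps(1) list_decode_inverse list_encode.simps(1))
  then show ?thesis by (simp add: tlcpow_decode lenc_def)
qed

lemma rec_len: "rec_nat 0 (\<lambda>i r. if (tlc ^^ i) c = 0 then r else Suc r) m = min m (lenc c)"
  by (induct m) (auto simp: tlcpow_zero)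

lemma lenc_le: "lenc c \<le> c"
  using length_le_encode[of "list_decode c"] by (simp add: lenc_def)

lemma pr_lenc: assumes "primrec_fn e" shows "primrec_fn (\<lambda>xs. lenc (e xs))"
proof -
  have "primrec_fn (\<lambda>ys. rec_nat 0 (\<lambda>i r. if (tlc ^^ i) (nth0 ys 0) = 0 then r else Suc r) (nth0 ys 0))"
    by (rule pr_rec[OF pr_nth pr_const]) (intro prI pr_tlcpow | simp only: nth0_drop)+
  then have "primrec_fn (\<lambda>ys. lenc (nth0 ys 0))"
    by (simp add: rec_len lenc_le min_absorb2)
  from pr_comp1[OF this assms] show ?thesis .
qed




lemma rec_bld: "k \<le> L \<Longrightarrow> rec_nat 0 (\<lambda>k r. Suc (prod_encode (g (L - Suc k), r))) k = list_encode (map g [L-k..<L])"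
proof (induction k)
  case 0 then show ?case by simp
next
  case (Suc k)
  have a: "L - Suc k < L" using Suc.prems by arith
  have b: "Suc (L - Suc k) = L - k" using Suc.prems by arith
  have "[L - Suc k..<L] = (L - Suc k) # [L - k..<L]"
    using upt_conv_Cons[OF a] b by simp
  then show ?case using Suc by simp
qed

lemma pr_bld:
  assumes L: "primrec_fn L" and G: "primrec_fn (\<lambda>ys. G (nth0 ys 0) (tl ys))"
  shows "primrec_fn (\<lambda>xs. list_encode (map (\<lambda>i. G i xs) [0..<L xs]))"
proof -
  have e: "primrec_fn (\<lambda>ys. L (drop 2 ys) - Suc (nth0 ys 0))"
    by (intro pr_sub pr_drop2 L pr_Suc pr_nth)
  have "primrec_fn (\<lambda>ys. (\<lambda>ys. G (nth0 ys 0) (tl ys)) ((L (drop 2 ys) - Suc (nth0 ys 0)) # drop 2 ys))"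
    by (rule pr_subst[OF G e, of _ "\<lambda>i. i + 2"]) simp
  then have g: "primrec_fn (\<lambda>ys. G (L (drop 2 ys) - Suc (nth0 ys 0)) (drop 2 ys))" by simp
  have "primrec_fn (\<lambda>xs. rec_nat 0 (\<lambda>k r. Suc (prod_encode (G (L xs - Suc k) xs, r))) (L xs))"
    by (rule pr_rec[OF L pr_const]) (intro pr_Suc pr_penc g pr_nth)
  moreover have "rec_nat 0 (\<lambda>k r. Suc (prod_encode (G (L xs - Suc k) xs, r))) (L xs) = list_encode (map (\<lambda>i. G i xs) [0..<L xs])" for xs
    using rec_bld[of "L xs" "L xs" "\<lambda>i. G i xs"] by simp
  ultimately show ?thesis by simp
qed

lemma pr_min: "primrec_fn a \<Longrightarrow> primrec_fn b \<Longrightarrow> primrec_fn (\<lambda>xs. min (a xs) (b xs))"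
  unfolding min_def by (intro pr_if pp_le)

definition takec :: "nat \<Rightarrow> nat \<Rightarrow> nat" where "takec i c = list_encode (take i (list_decode c))"

lemma take_as_map: "take i l = map (nth0 l) [0..<min i (length l)]"
  by (rule nth_equalityI) (auto simp: nth0_def)

lemma pr_takec: assumes "primrec_fn a" "primrec_fn b" shows "primrec_fn (\<lambda>xs. takec (a xs) (b xs))"
proof -
  have "primrec_fn (\<lambda>xs. list_encode (map (\<lambda>j. nthc j (b xs)) [0..<min (a xs) (lenc (b xs))]))"
  proof (rule pr_bld)
    show "primrec_fn (\<lambda>xs. min (a xs) (lenc (b xs)))" by (rule pr_min[OF assms(1) pr_lenc[OF assms(2)]])
    show "primrec_fn (\<lambda>ys. nthc (nth0 ys 0) (b (tl ys)))"
      by (rule pr_nthc[OF pr_nth pr_reindex[OF assms(2), of tl Suc]]) simp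
  qed
  then show ?thesis unfolding takec_def take_as_map nthc_decode lenc_def by simp
qed

abbreviation pre :: "baire \<Rightarrow> nat \<Rightarrow> nat" where "pre x k \<equiv> list_encode (map x [0..<k])"

lemma decode_pre[simp]: "list_decode (pre x k) = map x [0..<k]" by simp
lemma lenc_pre[simp]: "lenc (pre x k) = k" by (simp add: lenc_def)
lemma nthc_pre: "i < k \<Longrightarrow> nthc i (pre x k) = x i" by (simp add: nthc_decode)
lemma take_upt0: "take i [0..<k] = [0..<min i k]" by (rule nth_equalityI) auto
lemma takec_pre[simp]: "takec i (pre x k) = pre x (min i k)" by (simp add: takec_def take_map take_upt0)
lemma le_pre: "k \<le> pre x k" using length_le_encode[of "map x [0..<k]"] by simp

lemma Sigma01I:
  assumes "prpred (\<lambda>ys. Q (nth0 ys 0))" "A = {x. \<exists>k. Q (pre x k)}"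
  shows "Sigma01 A"
  unfolding Sigma01_def
proof (intro exI conjI)
  show "primrec_fn (\<lambda>ys. if Q (nth0 ys 0) then 1 else 0)" using assms(1) by (simp add: prpred_def)
  show "A = {x. \<exists>k. (if Q (nth0 [pre x k] 0) then 1 else 0) \<noteq> (0::nat)}" using assms(2) by simp
qed

definition rsub :: "(baire \<Rightarrow> baire) \<Rightarrow> bool" where
  "rsub F \<longleftrightarrow> (\<exists>G L. primrec_fn (\<lambda>ys. G (nth0 ys 0) (nth0 ys 1)) \<and> primrec_fn (\<lambda>ys. L (nth0 ys 0))
      \<and> mono L \<and> (\<forall>k. \<exists>j. k \<le> L j) \<and> (\<forall>x j i. i < L j \<longrightarrow> F x i = G i (pre x j)))"

lemma Sigma01_rsub:
  assumes A: "Sigma01 A" and F: "rsub F"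
  shows "Sigma01 (F -` A)"
proof -
  obtain f where f: "primrec_fn f" and Aeq: "A = {w. \<exists>k. f [pre w k] \<noteq> 0}"
    using A unfolding Sigma01_def by blast
  obtain G L where G: "primrec_fn (\<lambda>ys. G (nth0 ys 0) (nth0 ys 1))" and L: "primrec_fn (\<lambda>ys. L (nth0 ys 0))"
    and mono: "mono L" and unb: "\<forall>k. \<exists>j. k \<le> L j" and FG: "\<forall>x j i. i < L j \<longrightarrow> F x i = G i (pre x j)"
    using F unfolding rsub_def by blast
  define Q where "Q c = (\<exists>i<Suc (L (lenc c)). f [list_encode (map (\<lambda>t. G t c) [0..<i])] \<noteq> 0)" for c
  have "prpred (\<lambda>ys. Q (nth0 ys 0))"
    unfolding Q_def
    apply (rule pp_ex)
     apply (rule pr_Suc, rule pr_comp1[OF L], rule pr_lenc, rule pr_nth)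
    apply (rule pp_not, rule pp_eq, rule pr_app1[OF f], rule pr_bld, rule pr_nth)
    apply (simp only: nth0_tl)
    apply (rule pr_comp2[OF G]; rule pr_nth)
    apply (rule pr_const)
    done
  moreover have "F -` A = {x. \<exists>k. Q (pre x k)}"
  proof (intro set_eqI iffI)
    fix x assume "x \<in> F -` A"
    then obtain k where k: "f [pre (F x) k] \<noteq> 0" using Aeq by auto
    obtain j where j: "k \<le> L j" using unb by blast
    have "\<forall>t<k. F x t = G t (pre x j)" using FG j by (meson less_le_trans)
    then have "map (\<lambda>t. G t (pre x j)) [0..<k] = map (F x) [0..<k]" by auto
    then have eq: "list_encode (map (\<lambda>t. G t (pre x j)) [0..<k]) = pre (F x) k" by (simp only:)
    have "Q (pre x j)" unfolding Q_def lenc_pre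
      by (rule exI[of _ k]) (use k j eq in simp)
    then show "x \<in> {x. \<exists>k. Q (pre x k)}" by blast
  next
    fix x assume "x \<in> {x. \<exists>k. Q (pre x k)}"
    then obtain j i where i: "i < Suc (L j)" and fi: "f [list_encode (map (\<lambda>t. G t (pre x j)) [0..<i])] \<noteq> 0"
      unfolding Q_def by auto
    have "\<forall>t<i. F x t = G t (pre x j)" using FG i by (meson less_Suc_eq_le less_le_trans)
    then have "map (\<lambda>t. G t (pre x j)) [0..<i] = map (F x) [0..<i]" by auto
    then have "f [pre (F x) i] \<noteq> 0" using fi by metis
    then show "x \<in> F -` A" using Aeq by auto
  qed
  ultimately show ?thesis by (rule Sigma01I)
qed




definition tl_b :: "baire \<Rightarrow> baire" where "tl_b x = (\<lambda>i. x (Suc i))"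
definition interleave :: "baire \<Rightarrow> baire \<Rightarrow> baire" where
  "interleave a b = (\<lambda>i. if even i then a (i div 2) else b (i div 2))"

lemma tl_b_ncons[simp]: "tl_b (ncons m x) = x" by (simp add: tl_b_def ncons_def)
lemma ncons_0[simp]: "ncons m x 0 = m" by (simp add: ncons_def)
lemma ncons_Suc[simp]: "ncons m x (Suc i) = x i" by (simp add: ncons_def)
lemma ncons_tl_b[simp]: "ncons (x 0) (tl_b x) = x" by (rule ext) (simp add: ncons_def tl_b_def split: nat.splits)
lemma bfst_interleave[simp]: "bfst (interleave a b) = a" by (simp add: bfst_def interleave_def)
lemma bsnd_interleave[simp]: "bsnd (interleave a b) = b" by (simp add: bsnd_def interleave_def)
lemma interleave_bfst_bsnd[simp]: "interleave (bfst z) (bsnd z) = z"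
  by (rule ext) (simp add: bfst_def bsnd_def interleave_def)

lemma pre_ncons: "pre (ncons m x) (Suc k) = Suc (prod_encode (m, pre x k))"
proof -
  have "[0..<Suc k] = 0 # map Suc [0..<k]" by (simp add: map_Suc_upt upt_conv_Cons)
  then have "map (ncons m x) [0..<Suc k] = m # map x [0..<k]" by simp
  then show ?thesis by simp
qed

lemma lenc_0[simp]: "lenc 0 = 0" by (simp add: lenc_def)

lemma pre_ncons0: "pre x 0 = 0" by simp

lemma Sigma01E: "Sigma01 A \<Longrightarrow> (\<And>f. primrec_fn f \<Longrightarrow> A = {x. \<exists>k. f [pre x k] \<noteq> 0} \<Longrightarrow> P) \<Longrightarrow> P"
  unfolding Sigma01_def by blast

lemma Sigma01_Un: assumes "Sigma01 A" "Sigma01 B" shows "Sigma01 (A \<union> B)"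
proof -
  obtain f1 where f1: "primrec_fn f1" "A = {x. \<exists>k. f1 [pre x k] \<noteq> 0}" using assms(1) by (rule Sigma01E)
  obtain f2 where f2: "primrec_fn f2" "B = {x. \<exists>k. f2 [pre x k] \<noteq> 0}" using assms(2) by (rule Sigma01E)
  show ?thesis unfolding Sigma01_def
    by (rule exI[of _ "\<lambda>ys. f1 ys + f2 ys"]) (use f1 f2 in \<open>auto intro: pr_add\<close>)
qed

lemma Sigma01_Int: assumes "Sigma01 A" "Sigma01 B" shows "Sigma01 (A \<inter> B)"
proof -
  obtain f1 where f1: "primrec_fn f1" "A = {x. \<exists>k. f1 [pre x k] \<noteq> 0}" using assms(1) by (rule Sigma01E)
  obtain f2 where f2: "primrec_fn f2" "B = {x. \<exists>k. f2 [pre x k] \<noteq> 0}" using assms(2) by (rule Sigma01E)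
  define Q where "Q c = ((\<exists>i<Suc (lenc c). f1 [takec i c] \<noteq> 0) \<and> (\<exists>i<Suc (lenc c). f2 [takec i c] \<noteq> 0))" for c
  have "prpred (\<lambda>ys. Q (nth0 ys 0))" unfolding Q_def
    by (intro pp_and pp_ex pr_Suc pr_lenc pr_nth pp_not pp_eq pr_app1[OF f1(1)] pr_app1[OF f2(1)] pr_takec pr_nth_tl pr_const)
  moreover have "A \<inter> B = {x. \<exists>k. Q (pre x k)}"
  proof (intro set_eqI iffI)
    fix x assume "x \<in> A \<inter> B"
    then obtain k1 k2 where k1: "f1 [pre x k1] \<noteq> 0" and k2: "f2 [pre x k2] \<noteq> 0" using f1 f2 by auto
    let ?M = "max k1 k2"
    have "\<exists>i<Suc (lenc (pre x ?M)). f1 [takec i (pre x ?M)] \<noteq> 0"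
      using k1 by (intro exI[of _ k1]) (simp add: min_def del: upt_Suc)
    moreover have "\<exists>i<Suc (lenc (pre x ?M)). f2 [takec i (pre x ?M)] \<noteq> 0"
      using k2 by (intro exI[of _ k2]) (simp add: min_def del: upt_Suc)
    ultimately have "Q (pre x (max k1 k2))" unfolding Q_def by blast
    then show "x \<in> {x. \<exists>k. Q (pre x k)}" by blast
  next
    fix x assume "x \<in> {x. \<exists>k. Q (pre x k)}"
    then obtain j where "Q (pre x j)" by blast
    then show "x \<in> A \<inter> B" unfolding Q_def using f1 f2 by auto
  qed
  ultimately show ?thesis by (rule Sigma01I)
qed

lemma Sigma01_ex: assumes "Sigma01 A" shows "Sigma01 {x. \<exists>m. ncons m x \<in> A}"
proof -
  obtain f where f: "primrec_fn f" "A = {x. \<exists>k. f [pre x k] \<noteq> 0}" using assms by (rule Sigma01E)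
  define Q where "Q c = (f [0] \<noteq> 0 \<or> (\<exists>m<Suc c. \<exists>k<Suc (lenc c). f [Suc (prod_encode (m, takec k c))] \<noteq> 0))" for c
  have "prpred (\<lambda>ys. Q (nth0 ys 0))" unfolding Q_def
    by (intro pp_or pp_ex pr_Suc pr_lenc pr_nth pp_not pp_eq pr_app1[OF f(1)] pr_takec pr_nth_tl pr_const pr_penc
        | simp only: nth0_tl)+
  moreover have "{x. \<exists>m. ncons m x \<in> A} = {x. \<exists>k. Q (pre x k)}"
  proof (intro set_eqI iffI)
    fix x assume "x \<in> {x. \<exists>m. ncons m x \<in> A}"
    then obtain m k where mk: "f [pre (ncons m x) k] \<noteq> 0" using f by auto
    show "x \<in> {x. \<exists>k. Q (pre x k)}"
    proof (cases k)
      case 0 then show ?thesis using mk unfolding Q_def by auto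
    next
      case (Suc k')
      let ?j = "max m k'"
      have "m < Suc (pre x ?j)" using le_pre[of ?j x] by simp
      moreover have "k' < Suc ?j" by simp
      moreover have "takec k' (pre x ?j) = pre x k'" by (simp add: min_def)
      ultimately have "Q (pre x ?j)" unfolding Q_def using mk Suc pre_ncons lenc_pre by metis
      then show ?thesis by blast
    qed
  next
    fix x assume "x \<in> {x. \<exists>k. Q (pre x k)}"
    then obtain j where "Q (pre x j)" by blast
    then consider "f [0] \<noteq> 0" | m k where "f [Suc (prod_encode (m, takec k (pre x j)))] \<noteq> 0"
      unfolding Q_def by blast
    then show "x \<in> {x. \<exists>m. ncons m x \<in> A}"
    proof cases
      case 1
      then have "f [pre (ncons 0 x) 0] \<noteq> 0" by simp
      then show ?thesis using f by blast
    next
      case (2 m k)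
      have "pre (ncons m x) (Suc (min k j)) = Suc (prod_encode (m, takec k (pre x j)))"
        by (simp only: pre_ncons takec_pre)
      then have "f [pre (ncons m x) (Suc (min k j))] \<noteq> 0" using 2 by metis
      then show ?thesis using f by blast
    qed
  qed
  ultimately show ?thesis by (rule Sigma01I)
qed

lemma tlc_pre: "tlc (pre w (Suc j)) = pre (tl_b w) j"
proof -
  have "list_decode (tlc (pre w (Suc j))) = tl (map w [0..<Suc j])" by (simp add: tlc_decode)
  also have "\<dots> = map (tl_b w) [0..<j]"
    by (simp add: upt_conv_Cons map_Suc_upt[symmetric] tl_b_def del: upt_Suc)
  finally show ?thesis by (metis list_decode_inverse)
qed

lemma hdc_pre: "hdc (pre w (Suc j)) = w 0"
  by (simp add: hdc_decode nth0_def del: upt_Suc)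

lemma Sigma01_Sigma02: assumes "Sigma01 A" shows "Sigma0 2 A"
proof -
  obtain f where f: "primrec_fn f" "A = {x. \<exists>k. f [pre x k] \<noteq> 0}" using assms by (rule Sigma01E)
  define B where "B = {w. f [pre (tl_b w) (w 0)] \<noteq> 0}"
  define Q where "Q c = (0 < lenc c \<and> hdc c < lenc c \<and> f [takec (hdc c) (tlc c)] = 0)" for c
  have "prpred (\<lambda>ys. Q (nth0 ys 0))" unfolding Q_def
    by (intro pp_and pp_less pr_lenc pr_nth pr_hdc pp_eq pr_app1[OF f(1)] pr_takec pr_tlc pr_const)
  moreover have "- B = {x. \<exists>k. Q (pre x k)}"
  proof (intro set_eqI iffI)
    fix w assume "w \<in> - B"
    then have "Q (pre w (Suc (w 0)))" unfolding Q_def B_def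
      by (simp add: hdc_pre tlc_pre min_def del: upt_Suc)
    then show "w \<in> {x. \<exists>k. Q (pre x k)}" by blast
  next
    fix w assume "w \<in> {x. \<exists>k. Q (pre x k)}"
    then obtain j where Q: "Q (pre w j)" by blast
    then obtain j' where j': "j = Suc j'" unfolding Q_def by (cases j) auto
    then show "w \<in> - B" using Q unfolding Q_def B_def
      by (auto simp: hdc_pre tlc_pre min_def less_Suc_eq_le simp del: upt_Suc)
  qed
  ultimately have "Sigma01 (- B)" by (rule Sigma01I)
  then have "Pi0 (Suc 0) B" by simp
  moreover have "A = {x. \<exists>m. ncons m x \<in> B}" using f(2) unfolding B_def by simp
  ultimately show ?thesis by (simp add: numeral_2_eq_2) blast
qed




lemma div2_unique: "(2 * q = n \<or> Suc (2 * q) = n) \<longleftrightarrow> q = n div 2" by presburger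

lemma pr_div2: assumes "primrec_fn e" shows "primrec_fn (\<lambda>xs. e xs div 2)"
proof -
  have "primrec_fn (\<lambda>ys. rec_nat 0 (\<lambda>q r. if (2 * q = nth0 ys 0 \<or> Suc (2 * q) = nth0 ys 0) then q else r) (Suc (nth0 ys 0)))"
    by (rule pr_find) (intro pp_or pp_eq pr_mult pr_Suc pr_const pr_nth pr_nth_tl)+
  then have "primrec_fn (\<lambda>ys. nth0 ys 0 div 2)"
    by (simp only: rec_find[OF div2_unique]) (simp add: le_imp_less_Suc)
  from pr_comp1[OF this assms] show ?thesis .
qed

lemma pp_even: assumes "primrec_fn e" shows "prpred (\<lambda>xs. even (e xs))"
proof -
  have "prpred (\<lambda>xs. e xs = 2 * (e xs div 2))" by (intro pp_eq assms pr_mult pr_const pr_div2)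
  moreover have "(\<lambda>xs. e xs = 2 * (e xs div 2)) = (\<lambda>xs. even (e xs))" by (rule ext) presburger
  ultimately show ?thesis by simp
qed

lemma rsubI:
  assumes "primrec_fn (\<lambda>ys. G (nth0 ys 0) (nth0 ys 1))" "primrec_fn (\<lambda>ys. L (nth0 ys 0))"
    "mono L" "\<And>k. \<exists>j. k \<le> L j" "\<And>x j i. i < L j \<Longrightarrow> F x i = G i (pre x j)"
  shows "rsub F"
  unfolding rsub_def using assms by blast

lemma rsubE:
  assumes "rsub F"
  obtains G L where "primrec_fn (\<lambda>ys. G (nth0 ys 0) (nth0 ys 1))" "primrec_fn (\<lambda>ys. L (nth0 ys 0))"
    "mono L" "\<And>k. \<exists>j. k \<le> L j" "\<And>x j i. i < L j \<Longrightarrow> F x i = G i (pre x j)"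
  using assms unfolding rsub_def by blast

lemma rsub_id: "rsub (\<lambda>x. x)"
  by (rule rsubI[of nthc "\<lambda>j. j"]) (auto intro: pr_nthc pr_nth simp: nthc_pre mono_def)

lemma rsub_tl: "rsub tl_b"
proof (rule rsubI[of "\<lambda>i c. nthc (Suc i) c" "\<lambda>j. j - 1"])
  show "primrec_fn (\<lambda>ys. nthc (Suc (nth0 ys 0)) (nth0 ys 1))" by (intro pr_nthc pr_Suc pr_nth)
  show "primrec_fn (\<lambda>ys. nth0 ys 0 - 1)" by (intro pr_sub pr_nth pr_const)
  show "mono (\<lambda>j::nat. j - 1)" by (auto simp: mono_def)
  show "\<exists>j. k \<le> j - 1" for k :: nat by (rule exI[of _ "Suc k"]) simp
  show "tl_b x i = nthc (Suc i) (pre x j)" if "i < j - 1" for x j i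
    using that by (simp add: nthc_pre tl_b_def)
qed

lemma rsub_bfst: "rsub bfst"
proof (rule rsubI[of "\<lambda>i c. nthc (2 * i) c" "\<lambda>j. j div 2"])
  show "primrec_fn (\<lambda>ys. nthc (2 * nth0 ys 0) (nth0 ys 1))" by (intro pr_nthc pr_mult pr_const pr_nth)
  show "primrec_fn (\<lambda>ys. nth0 ys 0 div 2)" by (intro pr_div2 pr_nth)
  show "mono (\<lambda>j::nat. j div 2)" by (auto simp: mono_def div_le_mono)
  show "\<exists>j. k \<le> j div 2" for k :: nat by (rule exI[of _ "2 * k"]) simp
  show "bfst x i = nthc (2 * i) (pre x j)" if "i < j div 2" for x j i
    using that by (subst nthc_pre) (auto simp: bfst_def)
qed

lemma rsub_bsnd: "rsub bsnd"
proof (rule rsubI[of "\<lambda>i c. nthc (Suc (2 * i)) c" "\<lambda>j. j div 2"])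
  show "primrec_fn (\<lambda>ys. nthc (Suc (2 * nth0 ys 0)) (nth0 ys 1))" by (intro pr_nthc pr_Suc pr_mult pr_const pr_nth)
  show "primrec_fn (\<lambda>ys. nth0 ys 0 div 2)" by (intro pr_div2 pr_nth)
  show "mono (\<lambda>j::nat. j div 2)" by (auto simp: mono_def div_le_mono)
  show "\<exists>j. k \<le> j div 2" for k :: nat by (rule exI[of _ "2 * k"]) simp
  show "bsnd x i = nthc (Suc (2 * i)) (pre x j)" if "i < j div 2" for x j i
    using that by (subst nthc_pre) (auto simp: bsnd_def)
qed

lemma rsub_comp:
  assumes "rsub F1" "rsub F2" shows "rsub (\<lambda>x. F1 (F2 x))"
proof -
  obtain G1 L1 where G1: "primrec_fn (\<lambda>ys. G1 (nth0 ys 0) (nth0 ys 1))" and L1: "primrec_fn (\<lambda>ys. L1 (nth0 ys 0))"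
    and m1: "mono L1" and u1: "\<And>k. \<exists>j. k \<le> L1 j" and F1: "\<And>x j i. i < L1 j \<Longrightarrow> F1 x i = G1 i (pre x j)"
    using assms(1) unfolding rsub_def by blast
  obtain G2 L2 where G2: "primrec_fn (\<lambda>ys. G2 (nth0 ys 0) (nth0 ys 1))" and L2: "primrec_fn (\<lambda>ys. L2 (nth0 ys 0))"
    and m2: "mono L2" and u2: "\<And>k. \<exists>j. k \<le> L2 j" and F2: "\<And>x j i. i < L2 j \<Longrightarrow> F2 x i = G2 i (pre x j)"
    using assms(2) unfolding rsub_def by blast
  show ?thesis
  proof (rule rsubI[of "\<lambda>i c. G1 i (list_encode (map (\<lambda>t. G2 t c) [0..<L2 (lenc c)]))" "\<lambda>j. L1 (L2 j)"])
    have "primrec_fn (\<lambda>ys. list_encode (map (\<lambda>t. G2 t (nth0 ys 1)) [0..<L2 (lenc (nth0 ys 1))]))"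
    proof (rule pr_bld)
      show "primrec_fn (\<lambda>ys. L2 (lenc (nth0 ys 1)))" by (rule pr_comp1[OF L2 pr_lenc[OF pr_nth]])
      show "primrec_fn (\<lambda>ys. G2 (nth0 ys 0) (nth0 (tl ys) 1))"
        by (simp only: nth0_tl) (rule pr_comp2[OF G2 pr_nth pr_nth])
    qed
    then show "primrec_fn (\<lambda>ys. G1 (nth0 ys 0) (list_encode (map (\<lambda>t. G2 t (nth0 ys 1)) [0..<L2 (lenc (nth0 ys 1))])))"
      by (rule pr_comp2[OF G1 pr_nth])
    show "primrec_fn (\<lambda>ys. L1 (L2 (nth0 ys 0)))" by (rule pr_comp1[OF L1 L2])
    show "mono (\<lambda>j. L1 (L2 j))" using m1 m2 by (auto simp: mono_def)
    show "\<exists>j. k \<le> L1 (L2 j)" for k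
    proof -
      obtain j1 where j1: "k \<le> L1 j1" using u1 by blast
      obtain j2 where j2: "j1 \<le> L2 j2" using u2 by blast
      have "L1 j1 \<le> L1 (L2 j2)" using m1 j2 by (auto simp: mono_def)
      then show ?thesis using j1 by (intro exI[of _ j2]) simp
    qed
    show "F1 (F2 x) i = G1 i (list_encode (map (\<lambda>t. G2 t (pre x j)) [0..<L2 (lenc (pre x j))]))"
      if "i < L1 (L2 j)" for x j i
    proof -
      have "map (\<lambda>t. G2 t (pre x j)) [0..<L2 j] = map (F2 x) [0..<L2 j]" using F2 by auto
      then have "list_encode (map (\<lambda>t. G2 t (pre x j)) [0..<L2 (lenc (pre x j))]) = pre (F2 x) (L2 j)"
        by (simp only: lenc_pre)
      then show ?thesis using F1[OF that, of "F2 x"] by simp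
    qed
  qed
qed

lemma rsub_interleave:
  assumes "rsub F1" "rsub F2" shows "rsub (\<lambda>x. interleave (F1 x) (F2 x))"
proof -
  obtain G1 L1 where G1: "primrec_fn (\<lambda>ys. G1 (nth0 ys 0) (nth0 ys 1))" and L1: "primrec_fn (\<lambda>ys. L1 (nth0 ys 0))"
    and m1: "mono L1" and u1: "\<And>k. \<exists>j. k \<le> L1 j" and F1: "\<And>x j i. i < L1 j \<Longrightarrow> F1 x i = G1 i (pre x j)"
    using assms(1) unfolding rsub_def by blast
  obtain G2 L2 where G2: "primrec_fn (\<lambda>ys. G2 (nth0 ys 0) (nth0 ys 1))" and L2: "primrec_fn (\<lambda>ys. L2 (nth0 ys 0))"
    and m2: "mono L2" and u2: "\<And>k. \<exists>j. k \<le> L2 j" and F2: "\<And>x j i. i < L2 j \<Longrightarrow> F2 x i = G2 i (pre x j)"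
    using assms(2) unfolding rsub_def by blast
  show ?thesis
  proof (rule rsubI[of "\<lambda>i c. if even i then G1 (i div 2) c else G2 (i div 2) c" "\<lambda>j. 2 * min (L1 j) (L2 j)"])
    show "primrec_fn (\<lambda>ys. if even (nth0 ys 0) then G1 (nth0 ys 0 div 2) (nth0 ys 1) else G2 (nth0 ys 0 div 2) (nth0 ys 1))"
      by (intro pr_if pp_even pr_nth pr_comp2[OF G1] pr_comp2[OF G2] pr_div2)
    show "primrec_fn (\<lambda>ys. 2 * min (L1 (nth0 ys 0)) (L2 (nth0 ys 0)))"
      by (intro pr_mult pr_const pr_min L1 L2)
    show "mono (\<lambda>j. 2 * min (L1 j) (L2 j))" using m1 m2 unfolding mono_def by (meson min.mono mult_le_mono2)
    show "\<exists>j. k \<le> 2 * min (L1 j) (L2 j)" for k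
    proof -
      obtain j1 where j1: "k \<le> L1 j1" using u1 by blast
      obtain j2 where j2: "k \<le> L2 j2" using u2 by blast
      have "L1 j1 \<le> L1 (max j1 j2)" "L2 j2 \<le> L2 (max j1 j2)" using m1 m2 by (auto simp: mono_def)
      then show ?thesis using j1 j2 by (intro exI[of _ "max j1 j2"]) simp
    qed
    show "interleave (F1 x) (F2 x) i = (if even i then G1 (i div 2) (pre x j) else G2 (i div 2) (pre x j))"
      if "i < 2 * min (L1 j) (L2 j)" for x j i
    proof -
      have "i div 2 < L1 j" "i div 2 < L2 j" using that by auto
      then show ?thesis using F1 F2 by (simp add: interleave_def)
    qed
  qed
qed

lemma rsub_ncons:
  assumes phi: "primrec_fn (\<lambda>ys. \<phi> (nth0 ys 0))" and F: "rsub F"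
  shows "rsub (\<lambda>x. ncons (\<phi> (x 0)) (F x))"
proof -
  obtain G1 L1 where G1: "primrec_fn (\<lambda>ys. G1 (nth0 ys 0) (nth0 ys 1))" and L1: "primrec_fn (\<lambda>ys. L1 (nth0 ys 0))"
    and m1: "mono L1" and u1: "\<And>k. \<exists>j. k \<le> L1 j" and F1: "\<And>x j i. i < L1 j \<Longrightarrow> F x i = G1 i (pre x j)"
    using F unfolding rsub_def by blast
  show ?thesis
  proof (rule rsubI[of "\<lambda>i c. if i = 0 then \<phi> (nthc 0 c) else G1 (i - 1) c" "\<lambda>j. if j = 0 then 0 else Suc (L1 j)"])
    show "primrec_fn (\<lambda>ys. if nth0 ys 0 = 0 then \<phi> (nthc 0 (nth0 ys 1)) else G1 (nth0 ys 0 - 1) (nth0 ys 1))"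
      by (intro pr_if pp_eq pr_nth pr_const pr_comp1[OF phi] pr_nthc pr_comp2[OF G1] pr_sub)
    show "primrec_fn (\<lambda>ys. if nth0 ys 0 = 0 then 0 else Suc (L1 (nth0 ys 0)))"
      by (intro pr_if pp_eq pr_nth pr_const pr_Suc L1)
    show "mono (\<lambda>j. if j = 0 then 0 else Suc (L1 j))" using m1 by (auto simp: mono_def)
    show "\<exists>j. k \<le> (if j = 0 then 0 else Suc (L1 j))" for k
    proof -
      obtain j1 where j1: "k \<le> L1 j1" using u1 by blast
      have "L1 j1 \<le> L1 (Suc j1)" using m1 by (auto simp: mono_def)
      then show ?thesis using j1 by (intro exI[of _ "Suc j1"]) simp
    qed
    show "ncons (\<phi> (x 0)) (F x) i = (if i = 0 then \<phi> (nthc 0 (pre x j)) else G1 (i - 1) (pre x j))"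
      if "i < (if j = 0 then 0 else Suc (L1 j))" for x j i
    proof (cases i)
      case 0 then show ?thesis using that by (simp add: nthc_pre split: if_splits)
    next
      case (Suc i') then show ?thesis using that F1[of i' j x] by (simp split: if_splits)
    qed
  qed
qed




lemma Sigma0_SS: "Sigma0 (Suc (Suc n)) A \<longleftrightarrow> (\<exists>B. Sigma0 (Suc n) (- B) \<and> A = {x. \<exists>m. ncons m x \<in> B})"
  by simp

lemma Sigma0_01: "n \<le> 1 \<Longrightarrow> Sigma0 n A \<longleftrightarrow> Sigma01 A"
  by (cases n) auto

lemma nat_cases_SS: obtains "n \<le> 1" | n' where "n = Suc (Suc n')"
  by (metis One_nat_def Suc_pred bot_nat_0.not_eq_extremum le_Suc_eq not_less_eq_eq)

lemma rsub_shift: "rsub F \<Longrightarrow> rsub (\<lambda>w. ncons (w 0) (F (tl_b w)))"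
  using rsub_ncons[OF pr_nth[of 0], of "\<lambda>w. F (tl_b w)"] rsub_comp[OF _ rsub_tl] by simp

lemma Sigma0_rsub: "Sigma0 n A \<Longrightarrow> rsub F \<Longrightarrow> Sigma0 n (F -` A)"
proof (induction n arbitrary: A F rule: less_induct)
  case (less n)
  show ?case
  proof (cases n rule: nat_cases_SS)
    case 1 then show ?thesis using less.prems Sigma01_rsub by (simp add: Sigma0_01)
  next
    case (2 n')
    obtain B where B: "Sigma0 (Suc n') (- B)" and A: "A = {x. \<exists>m. ncons m x \<in> B}"
      using less.prems(1) 2 by auto
    define F' where "F' w = ncons (w 0) (F (tl_b w))" for w
    have rF': "rsub F'" unfolding F'_def by (rule rsub_shift[OF less.prems(2)])
    have "Sigma0 (Suc n') (F' -` (- B))" using less.IH[OF _ B rF'] 2 by simp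
    then have "Sigma0 (Suc n') (- (F' -` B))" by (simp add: vimage_Compl)
    moreover have "F -` A = {z. \<exists>m. ncons m z \<in> F' -` B}" unfolding A F'_def by simp
    ultimately show ?thesis using 2 by auto
  qed
qed

lemma Pi0_rsub: "Pi0 n A \<Longrightarrow> rsub F \<Longrightarrow> Pi0 n (F -` A)"
  using Sigma0_rsub[of n "- A" F] by (simp add: vimage_Compl)

lemma rsub_pfst_shift: "rsub (\<lambda>w. ncons (fst (prod_decode (w 0))) (tl_b w))"
  by (rule rsub_ncons[OF pr_pfst[OF pr_nth] rsub_tl])
lemma rsub_psnd_shift: "rsub (\<lambda>w. ncons (snd (prod_decode (w 0))) (tl_b w))"
  by (rule rsub_ncons[OF pr_psnd[OF pr_nth] rsub_tl])

lemma Sigma0_UnInt: "Sigma0 n A \<Longrightarrow> Sigma0 n B \<Longrightarrow> Sigma0 n (A \<union> B) \<and> Sigma0 n (A \<inter> B)"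
proof (induction n arbitrary: A B rule: less_induct)
  case (less n)
  show ?case
  proof (cases n rule: nat_cases_SS)
    case 1 then show ?thesis using less.prems Sigma01_Un Sigma01_Int by (simp add: Sigma0_01)
  next
    case (2 n')
    obtain B1 where B1: "Sigma0 (Suc n') (- B1)" and A: "A = {x. \<exists>m. ncons m x \<in> B1}"
      using less.prems(1) 2 by auto
    obtain B2 where B2: "Sigma0 (Suc n') (- B2)" and B: "B = {x. \<exists>m. ncons m x \<in> B2}"
      using less.prems(2) 2 by auto
    have IH: "Sigma0 (Suc n') (C \<union> D) \<and> Sigma0 (Suc n') (C \<inter> D)" if "Sigma0 (Suc n') C" "Sigma0 (Suc n') D" for C D
      using less.IH[of "Suc n'"] that 2 by simp
    have X: "Sigma0 (Suc n') (- (B1 \<union> B2))" using IH[OF B1 B2] by simp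
    have Y: "A \<union> B = {x. \<exists>m. ncons m x \<in> B1 \<union> B2}" unfolding A B by auto
    have U: "Sigma0 n (A \<union> B)" unfolding 2 Sigma0_SS
      by (rule exI[of _ "B1 \<union> B2"]) (use X Y in blast)
    define P1 where "P1 w = ncons (fst (prod_decode (w 0))) (tl_b w)" for w
    define P2 where "P2 w = ncons (snd (prod_decode (w 0))) (tl_b w)" for w
    have "Sigma0 (Suc n') (P1 -` (- B1))" unfolding P1_def by (rule Sigma0_rsub[OF B1 rsub_pfst_shift])
    moreover have "Sigma0 (Suc n') (P2 -` (- B2))" unfolding P2_def by (rule Sigma0_rsub[OF B2 rsub_psnd_shift])
    ultimately have "Sigma0 (Suc n') (P1 -` (- B1) \<union> P2 -` (- B2))" using IH by blast
    then have "Sigma0 (Suc n') (- (P1 -` B1 \<inter> P2 -` B2))" by (simp add: vimage_Compl)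
    moreover have "A \<inter> B = {x. \<exists>m. ncons m x \<in> P1 -` B1 \<inter> P2 -` B2}"
    proof (intro set_eqI iffI)
      fix x assume "x \<in> A \<inter> B"
      then obtain m1 m2 where "ncons m1 x \<in> B1" "ncons m2 x \<in> B2" unfolding A B by auto
      then have "ncons (prod_encode (m1, m2)) x \<in> P1 -` B1 \<inter> P2 -` B2" unfolding P1_def P2_def by simp
      then show "x \<in> {x. \<exists>m. ncons m x \<in> P1 -` B1 \<inter> P2 -` B2}" by blast
    next
      fix x assume "x \<in> {x. \<exists>m. ncons m x \<in> P1 -` B1 \<inter> P2 -` B2}"
      then show "x \<in> A \<inter> B" unfolding A B P1_def P2_def by auto
    qed
    ultimately have I: "Sigma0 n (A \<inter> B)" unfolding 2 Sigma0_SS by blast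
    from U I show ?thesis ..
  qed
qed

lemma Sigma0_Un: "Sigma0 n A \<Longrightarrow> Sigma0 n B \<Longrightarrow> Sigma0 n (A \<union> B)"
  using Sigma0_UnInt by blast
lemma Sigma0_Int: "Sigma0 n A \<Longrightarrow> Sigma0 n B \<Longrightarrow> Sigma0 n (A \<inter> B)"
  using Sigma0_UnInt by blast

lemma Sigma0_mono_S: "Sigma0 (Suc n) A \<Longrightarrow> Sigma0 (Suc (Suc n)) A"
proof (induction n arbitrary: A)
  case 0 then show ?case using Sigma01_Sigma02 by (simp add: numeral_2_eq_2)
next
  case (Suc n)
  obtain B where B: "Sigma0 (Suc n) (- B)" and A: "A = {x. \<exists>m. ncons m x \<in> B}"
    using Suc.prems by auto
  have "Sigma0 (Suc (Suc n)) (- B)" using Suc.IH[OF B] .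
  then show ?case using A by auto
qed

lemma Sigma01_Sigma0: "Sigma01 A \<Longrightarrow> Sigma0 n A"
proof (induction n)
  case 0 then show ?case by simp
next
  case (Suc n)
  show ?case
  proof (cases n)
    case 0 then show ?thesis using Suc.prems by simp
  next
    case (Suc m) then show ?thesis using Sigma0_mono_S[of m A] Suc.IH Suc.prems by simp
  qed
qed

lemma rsub_pair_shift: "rsub (\<lambda>w. ncons (fst (prod_decode (w 0))) (ncons (snd (prod_decode (w 0))) (tl_b w)))"
  by (rule rsub_ncons[OF pr_pfst[OF pr_nth] rsub_psnd_shift])

lemma Sigma0_ex: "Sigma0 n A \<Longrightarrow> Sigma0 n {x. \<exists>m. ncons m x \<in> A}"
proof (cases n rule: nat_cases_SS)
  case 1 then show "Sigma0 n A \<Longrightarrow> ?thesis" using Sigma01_ex by (simp add: Sigma0_01)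
next
  case (2 n')
  assume "Sigma0 n A"
  then obtain B where B: "Sigma0 (Suc n') (- B)" and A: "A = {x. \<exists>m. ncons m x \<in> B}"
    using 2 by auto
  define Q where "Q w = ncons (fst (prod_decode (w 0))) (ncons (snd (prod_decode (w 0))) (tl_b w))" for w
  have "Sigma0 (Suc n') (Q -` (- B))" unfolding Q_def by (rule Sigma0_rsub[OF B rsub_pair_shift])
  then have "Sigma0 (Suc n') (- (Q -` B))" by (simp add: vimage_Compl)
  moreover have "{x. \<exists>m. ncons m x \<in> A} = {x. \<exists>p. ncons p x \<in> Q -` B}"
  proof (intro set_eqI iffI)
    fix x assume "x \<in> {x. \<exists>m. ncons m x \<in> A}"
    then obtain m k where "ncons k (ncons m x) \<in> B" unfolding A by auto
    then have "ncons (prod_encode (k, m)) x \<in> Q -` B" unfolding Q_def by simp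
    then show "x \<in> {x. \<exists>p. ncons p x \<in> Q -` B}" by blast
  next
    fix x assume "x \<in> {x. \<exists>p. ncons p x \<in> Q -` B}"
    then show "x \<in> {x. \<exists>m. ncons m x \<in> A}" unfolding A Q_def by auto
  qed
  ultimately show ?thesis unfolding 2 Sigma0_SS by blast
qed




fun U :: "nat \<Rightarrow> baire set" where
  "U 0 = {z. \<exists>k. bfst z (pre (bsnd z) k) \<noteq> 0}"
| "U (Suc n) = {z. \<exists>m. interleave (bfst z) (ncons m (bsnd z)) \<notin> U n}"

lemma U0_Sigma01: "Sigma01 (U 0)"
proof -
  define b where "b c k = list_encode (map (\<lambda>t. nthc (Suc (2 * t)) c) [0..<k])" for c k
  define Q where "Q c = (\<exists>k<Suc (lenc c). 2 * k \<le> lenc c \<and> 2 * b c k < lenc c \<and> nthc (2 * b c k) c \<noteq> 0)" for c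
  have bp: "primrec_fn (\<lambda>ys. b (nth0 ys 1) (nth0 ys 0))"
    unfolding b_def
    by (rule pr_bld[OF pr_nth]) (simp only: nth0_tl, intro pr_nthc pr_Suc pr_mult pr_const pr_nth)
  have bp': "primrec_fn (\<lambda>ys. b (nth0 ys (Suc 0)) (nth0 ys 0))" using bp by simp
  have "prpred (\<lambda>ys. Q (nth0 ys 0))" unfolding Q_def
    apply (rule pp_ex, intro pr_Suc pr_lenc pr_nth)
    apply (simp only: nth0_tl)
    apply (intro pp_and pp_le pp_less pp_not pp_eq pr_mult pr_const pr_nth pr_lenc pr_nthc bp')
    done
  moreover have "U 0 = {z. \<exists>j. Q (pre z j)}"
  proof (intro set_eqI iffI)
    fix z assume "z \<in> U 0"
    then obtain k where k: "bfst z (pre (bsnd z) k) \<noteq> 0" by auto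
    let ?j = "2 * k + 2 * pre (bsnd z) k + 1"
    have "map (\<lambda>t. nthc (Suc (2*t)) (pre z ?j)) [0..<k] = map (bsnd z) [0..<k]"
      by (rule map_cong) (auto simp: nthc_pre bsnd_def simp del: upt_Suc)
    then have "b (pre z ?j) k = pre (bsnd z) k"
      unfolding b_def by (simp only:)
    then have "Q (pre z ?j)" unfolding Q_def using k
      by (intro exI[of _ k]) (auto simp: nthc_pre bfst_def simp del: upt_Suc)
    then show "z \<in> {z. \<exists>j. Q (pre z j)}" by blast
  next
    fix z assume "z \<in> {z. \<exists>j. Q (pre z j)}"
    then obtain j k where k: "2 * k \<le> j" "2 * b (pre z j) k < j" "nthc (2 * b (pre z j) k) (pre z j) \<noteq> 0"
      unfolding Q_def by auto
    have "map (\<lambda>t. nthc (Suc (2*t)) (pre z j)) [0..<k] = map (bsnd z) [0..<k]"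
      using k(1) by (intro map_cong) (auto simp: nthc_pre bsnd_def simp del: upt_Suc)
    then have "b (pre z j) k = pre (bsnd z) k"
      unfolding b_def by (simp only:)
    then show "z \<in> U 0" using k by (auto simp: nthc_pre bfst_def simp del: upt_Suc)
  qed
  ultimately show ?thesis by (rule Sigma01I)
qed

lemma rsub_R: "rsub (\<lambda>w. interleave (bfst (tl_b w)) (ncons (w 0) (bsnd (tl_b w))))"
  by (rule rsub_interleave[OF rsub_comp[OF rsub_bfst rsub_tl] rsub_ncons[OF pr_nth[of 0] rsub_comp[OF rsub_bsnd rsub_tl]]])

lemma U_Sigma: "Sigma0 (Suc n) (U n)"
proof (induction n)
  case 0 then show ?case using U0_Sigma01 by simp
next
  case (Suc n)
  define R where "R w = interleave (bfst (tl_b w)) (ncons (w 0) (bsnd (tl_b w)))" for w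
  have "Sigma0 (Suc n) (R -` U n)" unfolding R_def by (rule Sigma0_rsub[OF Suc.IH rsub_R])
  then have "Sigma0 (Suc n) (- (R -` (- U n)))" by (simp add: vimage_Compl)
  moreover have "U (Suc n) = {z. \<exists>m. ncons m z \<in> R -` (- U n)}" unfolding R_def by simp
  ultimately show ?case unfolding Sigma0_SS by blast
qed

lemma U_univ: "Sigma0 (Suc n) A \<Longrightarrow> \<exists>y. A = {x. interleave y x \<in> U n}"
proof (induction n arbitrary: A)
  case 0
  then obtain f where f: "primrec_fn f" "A = {x. \<exists>k. f [pre x k] \<noteq> 0}" by (auto elim: Sigma01E)
  show ?case by (rule exI[of _ "\<lambda>c. f [c]"]) (simp add: f)
next
  case (Suc n)
  obtain B where B: "Sigma0 (Suc n) (- B)" and A: "A = {x. \<exists>m. ncons m x \<in> B}"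
    using Suc.prems by auto
  obtain y where y: "- B = {x. interleave y x \<in> U n}" using Suc.IH[OF B] by blast
  have "A = {x. interleave y x \<in> U (Suc n)}"
  proof (intro set_eqI)
    fix x
    have "x \<in> A \<longleftrightarrow> (\<exists>m. ncons m x \<notin> - B)" unfolding A by simp
    also have "\<dots> \<longleftrightarrow> (\<exists>m. interleave y (ncons m x) \<notin> U n)" unfolding y by simp
    also have "\<dots> \<longleftrightarrow> interleave y x \<in> U (Suc n)" by simp
    finally show "x \<in> A \<longleftrightarrow> x \<in> {x. interleave y x \<in> U (Suc n)}" by simp
  qed
  then show ?case by blast
qed

definition Dg :: "nat \<Rightarrow> baire set" where "Dg n = {x. interleave x x \<in> U n}"

lemma Dg_Sigma: "Sigma0 (Suc n) (Dg n)"
proof -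
  have "Sigma0 (Suc n) ((\<lambda>x. interleave x x) -` U n)"
    by (rule Sigma0_rsub[OF U_Sigma rsub_interleave[OF rsub_id rsub_id]])
  then show ?thesis unfolding Dg_def by (simp add: vimage_def)
qed

lemma Dg_not_Pi: "\<not> Sigma0 (Suc n) (- Dg n)"
proof
  assume "Sigma0 (Suc n) (- Dg n)"
  then obtain y where y: "- Dg n = {x. interleave y x \<in> U n}" using U_univ by blast
  have "y \<in> - Dg n \<longleftrightarrow> y \<in> Dg n" using y unfolding Dg_def by auto
  then show False by auto
qed




lemma S1_Sigma01: "Sigma01 {z. tl_b (bfst z) \<noteq> tl_b (bsnd z)}"
proof -
  define Q where "Q c = (\<exists>i<lenc c. Suc (Suc (Suc (2 * i))) < lenc c \<and>
      nthc (Suc (Suc (2 * i))) c \<noteq> nthc (Suc (Suc (Suc (2 * i)))) c)" for c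
  have "prpred (\<lambda>ys. Q (nth0 ys 0))" unfolding Q_def
    by (intro pp_ex pr_lenc pr_nth pp_and pp_less pr_Suc pr_mult pr_const pp_not pp_eq pr_nthc pr_nth_tl)
  moreover have "{z. tl_b (bfst z) \<noteq> tl_b (bsnd z)} = {z. \<exists>j. Q (pre z j)}"
  proof (intro set_eqI iffI)
    fix z assume "z \<in> {z. tl_b (bfst z) \<noteq> tl_b (bsnd z)}"
    then obtain i where i: "z (Suc (Suc (2 * i))) \<noteq> z (Suc (Suc (Suc (2 * i))))"
      by (auto simp: tl_b_def bfst_def bsnd_def fun_eq_iff)
    have "Q (pre z (4 + 2 * i))" unfolding Q_def using i
      by (intro exI[of _ i]) (auto simp: nthc_pre simp del: upt_Suc)
    then show "z \<in> {z. \<exists>j. Q (pre z j)}" by blast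
  next
    fix z assume "z \<in> {z. \<exists>j. Q (pre z j)}"
    then obtain j i where "Suc (Suc (Suc (2 * i))) < j"
      "nthc (Suc (Suc (2 * i))) (pre z j) \<noteq> nthc (Suc (Suc (Suc (2 * i)))) (pre z j)"
      unfolding Q_def by auto
    then have "z (Suc (Suc (2 * i))) \<noteq> z (Suc (Suc (Suc (2 * i))))" by (simp add: nthc_pre del: upt_Suc)
    then have "tl_b (bfst z) i \<noteq> tl_b (bsnd z) i" by (simp add: tl_b_def bfst_def bsnd_def)
    then show "z \<in> {z. tl_b (bfst z) \<noteq> tl_b (bsnd z)}" by auto
  qed
  ultimately show ?thesis by (rule Sigma01I)
qed

lemma pp_neq_even: "primrec_fn a \<Longrightarrow> primrec_fn b \<Longrightarrow> prpred (\<lambda>xs. (even (a xs) \<and> \<not> even (b xs)) \<or> (\<not> even (a xs) \<and> even (b xs)))"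
  by (intro pp_or pp_and pp_not pp_even)

lemma S3_Sigma01: "Sigma01 {z. even (bfst z 0) \<noteq> even (bsnd z 0)}"
proof -
  define Q where "Q c = (1 < lenc c \<and> ((even (nthc 0 c) \<and> \<not> even (nthc 1 c)) \<or> (\<not> even (nthc 0 c) \<and> even (nthc 1 c))))" for c
  have "prpred (\<lambda>ys. Q (nth0 ys 0))" unfolding Q_def
    by (intro pp_and pp_less pr_const pr_lenc pr_nth pp_neq_even pr_nthc)
  moreover have "{z. even (bfst z 0) \<noteq> even (bsnd z 0)} = {z. \<exists>j. Q (pre z j)}"
  proof (intro set_eqI iffI)
    fix z assume "z \<in> {z. even (bfst z 0) \<noteq> even (bsnd z 0)}"
    then have "Q (pre z 2)" unfolding Q_def by (auto simp: nthc_pre bfst_def bsnd_def simp del: upt_Suc)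
    then show "z \<in> {z. \<exists>j. Q (pre z j)}" by blast
  next
    fix z assume "z \<in> {z. \<exists>j. Q (pre z j)}"
    then obtain j where "Q (pre z j)" by blast
    then show "z \<in> {z. even (bfst z 0) \<noteq> even (bsnd z 0)}" unfolding Q_def
      by (auto simp: nthc_pre bfst_def bsnd_def simp del: upt_Suc)
  qed
  ultimately show ?thesis by (rule Sigma01I)
qed

lemma S4_Sigma01: "Sigma01 {w. even (fst (prod_decode (w 0))) \<noteq> even (snd (prod_decode (w 0)))}"
proof -
  define Q where "Q c = (0 < lenc c \<and> ((even (fst (prod_decode (nthc 0 c))) \<and> \<not> even (snd (prod_decode (nthc 0 c))))
       \<or> (\<not> even (fst (prod_decode (nthc 0 c))) \<and> even (snd (prod_decode (nthc 0 c))))))" for c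
  have "prpred (\<lambda>ys. Q (nth0 ys 0))" unfolding Q_def
    by (intro pp_and pp_less pr_const pr_lenc pr_nth pp_neq_even pr_nthc pr_pfst pr_psnd)
  moreover have "{w :: baire. even (fst (prod_decode (w 0))) \<noteq> even (snd (prod_decode (w 0)))} = {z. \<exists>j. Q (pre z j)}"
  proof (intro set_eqI iffI)
    fix z :: baire assume "z \<in> {w. even (fst (prod_decode (w 0))) \<noteq> even (snd (prod_decode (w 0)))}"
    then have "Q (pre z 1)" unfolding Q_def by (auto simp: nthc_pre simp del: upt_Suc)
    then show "z \<in> {z. \<exists>j. Q (pre z j)}" by blast
  next
    fix z assume "z \<in> {z. \<exists>j. Q (pre z j)}"
    then obtain j where "Q (pre z j)" by blast
    then show "z \<in> {w. even (fst (prod_decode (w 0))) \<noteq> even (snd (prod_decode (w 0)))}" unfolding Q_def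
      by (auto simp: nthc_pre simp del: upt_Suc)
  qed
  ultimately show ?thesis by (rule Sigma01I)
qed

lemma path_parity:
  assumes "(u, v) \<in> G\<^sup>*" "G\<^sup>* = E0" "\<And>a b. (a, b) \<in> E0 \<Longrightarrow> tl_b a = tl_b b" "even (u 0) \<noteq> even (v 0)"
  shows "\<exists>a b. (a, b) \<in> G \<and> tl_b a = tl_b u \<and> tl_b b = tl_b u \<and> even (a 0) \<noteq> even (b 0)"
  using assms(1,4)
proof (induction rule: rtrancl_induct)
  case base then show ?case by simp
next
  case (step v w)
  show ?case
  proof (cases "even (u 0) = even (v 0)")
    case True
    have "tl_b v = tl_b u" using assms(2,3) step.hyps(1) by metis
    moreover have "(v, w) \<in> E0" using assms(2) step.hyps(2) by blast
    then have "tl_b w = tl_b v" using assms(3) by metis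
    ultimately show ?thesis using step True by metis
  next
    case False then show ?thesis using step.IH by blast
  qed
qed

theorem proposition3p2:
  fixes n :: nat
  assumes "n \<ge> 1"
  shows "\<exists>E :: (baire \<times> baire) set. equiv UNIV E \<and> Pi0_rel n E \<and>
           (\<forall>x. countable (E `` {x}) \<and> infinite (E `` {x})) \<and>
           \<not> Sigma0_graphable n E"
proof -
  obtain n' where n: "n = Suc n'" using assms by (cases n) auto
  define P where "P = - Dg n'"
  have PnS: "\<not> Sigma0 n P" unfolding P_def n by (rule Dg_not_Pi)
  have DS: "Sigma0 n (- P)" unfolding P_def n by (simp add: Dg_Sigma)
  define E where "E = {(x, y). tl_b x = tl_b y \<and> (tl_b x \<in> P \<or> even (x 0) = even (y 0))}"
  have Etl: "tl_b a = tl_b b" if "(a, b) \<in> E" for a b using that unfolding E_def by auto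
  have eqv: "equiv UNIV E"
    unfolding equiv_def refl_on_def sym_def trans_def E_def by auto
  have "- rel_code E = {z. tl_b (bfst z) \<noteq> tl_b (bsnd z)} \<union>
      ((\<lambda>z. tl_b (bfst z)) -` (- P) \<inter> {z. even (bfst z 0) \<noteq> even (bsnd z 0)})"
    unfolding rel_code_def E_def by auto
  moreover have "Sigma0 n ({z. tl_b (bfst z) \<noteq> tl_b (bsnd z)} \<union>
      ((\<lambda>z. tl_b (bfst z)) -` (- P) \<inter> {z. even (bfst z 0) \<noteq> even (bsnd z 0)}))"
    by (intro Sigma0_Un Sigma0_Int Sigma01_Sigma0 S1_Sigma01 S3_Sigma01
        Sigma0_rsub[OF DS rsub_comp[OF rsub_tl rsub_bfst]])
  ultimately have PiE: "Pi0_rel n E" unfolding Pi0_rel_def by simp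
  have cls: "countable (E `` {x}) \<and> infinite (E `` {x})" for x
  proof
    have "E `` {x} \<subseteq> range (\<lambda>m. ncons m (tl_b x))"
    proof
      fix y assume "y \<in> E `` {x}"
      then have "tl_b y = tl_b x" using Etl by auto
      then have "y = ncons (y 0) (tl_b x)" by (metis ncons_tl_b)
      then show "y \<in> range (\<lambda>m. ncons m (tl_b x))" by blast
    qed
    then show "countable (E `` {x})" by (rule countable_subset) simp
    have sub: "range (\<lambda>k. ncons (x 0 + 2 * k) (tl_b x)) \<subseteq> E `` {x}"
      unfolding E_def by auto
    have "inj (\<lambda>k. ncons (x 0 + 2 * k) (tl_b x))"
      by (rule injI) (metis ncons_0 add_left_cancel mult_left_cancel zero_neq_numeral)
    then have "infinite (range (\<lambda>k. ncons (x 0 + 2 * k) (tl_b x)))"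
      using finite_imageD infinite_UNIV_nat by blast
    then show "infinite (E `` {x})" using sub finite_subset by blast
  qed
  have ng: "\<not> Sigma0_graphable n E"
  proof
    assume "Sigma0_graphable n E"
    then obtain G where GS: "Sigma0_rel n G" and GE: "G\<^sup>* = E" unfolding Sigma0_graphable_def by blast
    define R where "R w = interleave (ncons (fst (prod_decode (w 0))) (tl_b w)) (ncons (snd (prod_decode (w 0))) (tl_b w))" for w
    define C where "C = R -` rel_code G \<inter> {w. even (fst (prod_decode (w 0))) \<noteq> even (snd (prod_decode (w 0)))}"
    have "Sigma0 n C" unfolding C_def R_def
      by (intro Sigma0_Int Sigma01_Sigma0 S4_Sigma01 Sigma0_rsub[OF GS[unfolded Sigma0_rel_def]]
          rsub_interleave rsub_pfst_shift rsub_psnd_shift)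
    then have S: "Sigma0 n {t. \<exists>m. ncons m t \<in> C}" by (rule Sigma0_ex)
    have "{t. \<exists>m. ncons m t \<in> C} = P"
    proof (intro set_eqI iffI)
      fix t assume "t \<in> {t. \<exists>m. ncons m t \<in> C}"
      then obtain m where "(ncons (fst (prod_decode m)) t, ncons (snd (prod_decode m)) t) \<in> G"
        and par: "even (fst (prod_decode m)) \<noteq> even (snd (prod_decode m))"
        unfolding C_def R_def rel_code_def by auto
      then have "(ncons (fst (prod_decode m)) t, ncons (snd (prod_decode m)) t) \<in> E" using GE by blast
      then show "t \<in> P" using par unfolding E_def by auto
    next
      fix t assume t: "t \<in> P"
      have "(ncons 0 t, ncons 1 t) \<in> E" unfolding E_def using t by simp
      then have "(ncons 0 t, ncons 1 t) \<in> G\<^sup>*" using GE by simp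
      from path_parity[OF this GE Etl] obtain a b where ab: "(a, b) \<in> G" "tl_b a = t" "tl_b b = t"
        "even (a 0) \<noteq> even (b 0)" by auto
      have "R (ncons (prod_encode (a 0, b 0)) t) = interleave a b"
        unfolding R_def using ab(2,3) by (metis ncons_0 ncons_tl_b prod_encode_inverse tl_b_ncons fst_conv snd_conv)
      then have "ncons (prod_encode (a 0, b 0)) t \<in> C" unfolding C_def rel_code_def using ab by simp
      then show "t \<in> {t. \<exists>m. ncons m t \<in> C}" by blast
    qed
    then show False using S PnS by simp
  qed
  show ?thesis using eqv PiE cls ng by blast
qed


end
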